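(* Let $$P=\begin{bmatrix} x_1 & x_2 & x_3 & x_4 & x_5 & x_6 & x_7 & x_8\\ 3x_1-x_2 & -x_1 & 3x_3-x_4 & -x_3 & 3x_5-x_6 & -x_5 & 3x_7-x_8 & -x_7\\ 3x_3 & 3x_4 & x_1 & x_2 & 3x_7 & 3x_8 & x_5 & x_6\\ 9x_3-3x_4 & -3x_3 & 3x_1-x_2 & -x_1 & 9x_7-3x_8 & -3x_7 & 3x_5-x_6 & -x_5\\ 14x_5 & 14x_6 & 14x_7 & 14x_8 & x_1 & x_2 & x_3 & x_4\\ 42x_5-14x_6 & -14x_5 & 42x_7-14x_8 & -14x_7 & 3x_1-x_2 & -x_1 & 3x_3-x_4 & -x_3\\ 42x_7 & 42x_8 & 14x_5 & 14x_6 & 3x_3 & 3x_4 & x_1 & x_2\\ 126x_7-42x_8 & -42x_7 & 42x_5-14x_6 & -14x_5 & 9x_3-3x_4 & -3x_3 & 3x_1-x_2 & -x_1\end{bmatrix}.$$ Then the octic diophantine equation $\det P=1$ in the unknowns $x_1,\dots,x_8$ has infinitely many solutions in positive integers (one of them being $(2,6,1,3,7,21,4,12)$). *)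

theory Defs
  imports "HOL-Analysis.Analysis"
begin

text \<open>The 8x8 integer matrix P(x1,...,x8) of the paper; row i of the paper is
  the i-th list below (the library's vector construction places the k-th list
  entry at index k, k = 1..8).\<close>
definition Pmat :: "int \<Rightarrow> int \<Rightarrow> int \<Rightarrow> int \<Rightarrow> int \<Rightarrow> int \<Rightarrow> int \<Rightarrow> int \<Rightarrow> int^8^8" where
  "Pmat x1 x2 x3 x4 x5 x6 x7 x8 = vector [
     vector [x1, x2, x3, x4, x5, x6, x7, x8],
     vector [3*x1-x2, -x1, 3*x3-x4, -x3, 3*x5-x6, -x5, 3*x7-x8, -x7],
     vector [3*x3, 3*x4, x1, x2, 3*x7, 3*x8, x5, x6],
     vector [9*x3-3*x4, -3*x3, 3*x1-x2, -x1, 9*x7-3*x8, -3*x7, 3*x5-x6, -x5],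
     vector [14*x5, 14*x6, 14*x7, 14*x8, x1, x2, x3, x4],
     vector [42*x5-14*x6, -14*x5, 42*x7-14*x8, -14*x7, 3*x1-x2, -x1, 3*x3-x4, -x3],
     vector [42*x7, 42*x8, 14*x5, 14*x6, 3*x3, 3*x4, x1, x2],
     vector [126*x7-42*x8, -42*x7, 42*x5-14*x6, -14*x5, 9*x3-3*x4, -3*x3, 3*x1-x2, -x1]]"

end

theory Submission imports Defs begin
lemma exhaust_8:
  fixes x :: 8
  shows "x = 1 \<or> x = 2 \<or> x = 3 \<or> x = 4 \<or> x = 5 \<or> x = 6 \<or> x = 7 \<or> x = 8"
proof (induct x)
  case (of_int z)
  then have "z = 0 \<or> z = 1 \<or> z = 2 \<or> z = 3 \<or> z = 4 \<or> z = 5 \<or> z = 6 \<or> z = 7" by fastforce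
  then show ?case by auto
qed
lemma UNIV_8: "UNIV = {1, 2, 3, 4, 5, 6, 7, 8::8}"
  using exhaust_8 by auto
lemma sum_8: "sum f (UNIV::8 set) = f 1 + f 2 + f 3 + f 4 + f 5 + f 6 + f 7 + f 8"
  unfolding UNIV_8 by (simp add: ac_simps)
lemma prod_8: "prod f (UNIV::8 set) = f 1 * f 2 * f 3 * f 4 * f 5 * f 6 * f 7 * f 8"
  unfolding UNIV_8 by (simp add: ac_simps)
lemma forall_8: "(\<forall>i::8. P i) \<longleftrightarrow> P 1 \<and> P 2 \<and> P 3 \<and> P 4 \<and> P 5 \<and> P 6 \<and> P 7 \<and> P 8"
  by (metis exhaust_8)
lemma vector_8 [simp]:
 "(vector [a,b,c,d,e,f,g,h] ::('a::zero)^8)$1 = a"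
 "(vector [a,b,c,d,e,f,g,h] ::('a::zero)^8)$2 = b"
 "(vector [a,b,c,d,e,f,g,h] ::('a::zero)^8)$3 = c"
 "(vector [a,b,c,d,e,f,g,h] ::('a::zero)^8)$4 = d"
 "(vector [a,b,c,d,e,f,g,h] ::('a::zero)^8)$5 = e"
 "(vector [a,b,c,d,e,f,g,h] ::('a::zero)^8)$6 = f"
 "(vector [a,b,c,d,e,f,g,h] ::('a::zero)^8)$7 = g"
 "(vector [a,b,c,d,e,f,g,h] ::('a::zero)^8)$8 = h"
  unfolding vector_def by simp_all
definition Qu :: "int^8^8" where "Qu = vector [
  vector [2, 6, 1, 3, 7, 21, 4, 12],
  vector [6, 20, 3, 10, 21, 70, 12, 40],
  vector [3, 9, 2, 6, 12, 36, 7, 21],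
  vector [9, 30, 6, 20, 36, 120, 21, 70],
  vector [98, 294, 56, 168, 2, 6, 1, 3],
  vector [294, 980, 168, 560, 6, 20, 3, 10],
  vector [168, 504, 98, 294, 3, 9, 2, 6],
  vector [504, 1680, 294, 980, 9, 30, 6, 20]]"

definition LQ :: "int^8^8" where "LQ = vector [
  vector [5, 0, 0, 0, 0, 0, 0, -3],
  vector [-2505, 751, 0, 0, 0, 0, 0, 1],
  vector [-5010, -252, 3340, 0, 0, 0, 0, 3],
  vector [16290, -5472, -10860, 3592, 0, 0, 0, 1],
  vector [-101360, 26334, -50680, 17556, 3620, 0, 0, -627],
  vector [840, -491848, 420, 283682, -30, 131053, 0, -75658],
  vector [23520, -7056, -13580, 4074, -6270, 1881, 3620, -1086],
  vector [0, 0, 0, 0, 0, 0, 0, 1]]"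

definition UQ :: "int^8^8" where "UQ = vector [
  vector [-1502, -5010, -877, -2925, 8, 15, 2, 0],
  vector [0, 1670, 42, 975, -1755, -5, -1002, 0],
  vector [0, 0, 1796, 5430, -255, -2520, 334, 0],
  vector [0, 0, 0, 1810, -1881, -840, -1086, 0],
  vector [0, 0, 0, 0, -131053, -30, -75658, 0],
  vector [0, 0, 0, 0, 0, -3620, 627, 0],
  vector [0, 0, 0, 0, 0, 0, -1, 0],
  vector [504, 1680, 294, 980, 9, 30, 6, 20]]"

definition LP :: "int^8^8" where "LP = vector [
  vector [1, 0, 0, 0, 0, 0, 0, 6],
  vector [0, 1, 0, 0, 0, 0, 0, -2],
  vector [-501, 252, 334, 0, 0, 0, 0, -3],
  vector [0, -585, 0, 334, 0, 0, 0, 1],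
  vector [-10136, -26334, -5068, -17556, 362, 0, 0, 627],
  vector [0, -1358, 0, 784, 0, 362, 0, -209],
  vector [2352, 7056, -1358, -4074, -627, -1881, 362, 1086],
  vector [0, 0, 0, 0, 0, 0, 0, 1]]"

definition UP :: "int^8^8" where "UP = vector [
  vector [2, -1002, 1, -585, 7, 3, 4, 0],
  vector [0, 334, 0, 195, 0, -1, 0, 0],
  vector [0, 0, 167, 543, 501, -252, 334, 0],
  vector [0, 0, 0, -181, 0, 84, 0, 0],
  vector [0, 0, 0, 0, -131044, -3, -75658, 0],
  vector [0, 0, 0, 0, 0, 1, 0, 0],
  vector [0, 0, 0, 0, 0, 0, -1, 0],
  vector [0, -168, 0, -98, 0, -3, 0, -2]]"

definition stp :: "int\<times>int\<times>int\<times>int\<times>int\<times>int\<times>int\<times>int \<Rightarrow> int\<times>int\<times>int\<times>int\<times>int\<times>int\<times>int\<times>int" where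
  "stp = (\<lambda>(a1, a2, a3, a4, a5, a6, a7, a8). (2*a1 + 6*a2 + 3*a3 + 9*a4 + 98*a5 + 294*a6 + 168*a7 + 504*a8,
    6*a1 + 20*a2 + 9*a3 + 30*a4 + 294*a5 + 980*a6 + 504*a7 + 1680*a8,
    1*a1 + 3*a2 + 2*a3 + 6*a4 + 56*a5 + 168*a6 + 98*a7 + 294*a8,
    3*a1 + 10*a2 + 6*a3 + 20*a4 + 168*a5 + 560*a6 + 294*a7 + 980*a8,
    7*a1 + 21*a2 + 12*a3 + 36*a4 + 2*a5 + 6*a6 + 3*a7 + 9*a8,
    21*a1 + 70*a2 + 36*a3 + 120*a4 + 6*a5 + 20*a6 + 9*a7 + 30*a8,
    4*a1 + 12*a2 + 7*a3 + 21*a4 + 1*a5 + 3*a6 + 2*a7 + 6*a8,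
    12*a1 + 40*a2 + 21*a3 + 70*a4 + 3*a5 + 10*a6 + 6*a7 + 20*a8))"

lemma Pmat_Qu: "Pmat a1 a2 a3 a4 a5 a6 a7 a8 ** Qu = Pmat (2*a1 + 6*a2 + 3*a3 + 9*a4 + 98*a5 + 294*a6 + 168*a7 + 504*a8) (6*a1 + 20*a2 + 9*a3 + 30*a4 + 294*a5 + 980*a6 + 504*a7 + 1680*a8) (1*a1 + 3*a2 + 2*a3 + 6*a4 + 56*a5 + 168*a6 + 98*a7 + 294*a8) (3*a1 + 10*a2 + 6*a3 + 20*a4 + 168*a5 + 560*a6 + 294*a7 + 980*a8) (7*a1 + 21*a2 + 12*a3 + 36*a4 + 2*a5 + 6*a6 + 3*a7 + 9*a8) (21*a1 + 70*a2 + 36*a3 + 120*a4 + 6*a5 + 20*a6 + 9*a7 + 30*a8) (4*a1 + 12*a2 + 7*a3 + 21*a4 + 1*a5 + 3*a6 + 2*a7 + 6*a8) (12*a1 + 40*a2 + 21*a3 + 70*a4 + 3*a5 + 10*a6 + 6*a7 + 20*a8)"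
  unfolding Pmat_def Qu_def
  by (simp add: vec_eq_iff forall_8 matrix_matrix_mult_def sum_8 algebra_simps)

lemma Rep8: "Rep_bit0 (1::8) = 1" "Rep_bit0 (2::8) = 2" "Rep_bit0 (3::8) = 3" "Rep_bit0 (4::8) = 4"
  "Rep_bit0 (5::8) = 5" "Rep_bit0 (6::8) = 6" "Rep_bit0 (7::8) = 7" "Rep_bit0 (8::8) = 0"
  by (simp_all add: bit0.Rep_numeral bit0.Rep_1)

lemma det_LU:
  fixes L A U :: "int^8^8"
  assumes "L ** A = U" "\<forall>i j. i < j \<longrightarrow> L$i$j = 0" "\<forall>i j. j < i \<longrightarrow> U$i$j = 0"
  shows "prod (\<lambda>i. L$i$i) UNIV * det A = prod (\<lambda>i. U$i$i) UNIV"
proof -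
  have "det L = prod (\<lambda>i. L$i$i) UNIV" by (rule det_lowerdiagonal) (use assms(2) in auto)
  moreover have "det U = prod (\<lambda>i. U$i$i) UNIV" by (rule det_upperdiagonal) (use assms(3) in auto)
  ultimately show ?thesis using det_mul[of L A] assms(1) by simp
qed

lemma det_Qu: "det Qu = 1"
proof -
  have "LQ ** Qu = UQ" unfolding LQ_def Qu_def UQ_def
    by (simp add: vec_eq_iff forall_8 matrix_matrix_mult_def sum_8)
  moreover have "\<forall>i j. i < j \<longrightarrow> LQ$i$j = 0" unfolding LQ_def
    by (simp add: forall_8 less_bit0_def Rep8)
  moreover have "\<forall>i j. j < i \<longrightarrow> UQ$i$j = 0" unfolding UQ_def
    by (simp add: forall_8 less_bit0_def Rep8)
  ultimately have "prod (\<lambda>i. LQ$i$i) UNIV * det Qu = prod (\<lambda>i. UQ$i$i) UNIV" by (rule det_LU)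
  then show ?thesis unfolding LQ_def UQ_def by (simp add: prod_8)
qed

lemma det_Pu: "det (Pmat 2 6 1 3 7 21 4 12) = 1"
proof -
  have "LP ** Pmat 2 6 1 3 7 21 4 12 = UP" unfolding LP_def Pmat_def UP_def
    by (simp add: vec_eq_iff forall_8 matrix_matrix_mult_def sum_8)
  moreover have "\<forall>i j. i < j \<longrightarrow> LP$i$j = 0" unfolding LP_def
    by (simp add: forall_8 less_bit0_def Rep8)
  moreover have "\<forall>i j. j < i \<longrightarrow> UP$i$j = 0" unfolding UP_def
    by (simp add: forall_8 less_bit0_def Rep8)
  ultimately have "prod (\<lambda>i. LP$i$i) UNIV * det (Pmat 2 6 1 3 7 21 4 12) = prod (\<lambda>i. UP$i$i) UNIV" by (rule det_LU)
  then show ?thesis unfolding LP_def UP_def by (simp add: prod_8)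
qed

definition SS :: "(int\<times>int\<times>int\<times>int\<times>int\<times>int\<times>int\<times>int) set" where
  "SS = {(x1::int, x2::int, x3::int, x4::int, x5::int, x6::int, x7::int, x8::int).
            0 < x1 \<and> 0 < x2 \<and> 0 < x3 \<and> 0 < x4 \<and> 0 < x5 \<and> 0 < x6 \<and> 0 < x7 \<and> 0 < x8 \<and>
            det (Pmat x1 x2 x3 x4 x5 x6 x7 x8) = 1}"

lemma stp_SS: assumes "x \<in> SS" shows "stp x \<in> SS \<and> fst x < fst (stp x)"
proof -
  obtain a1 a2 a3 a4 a5 a6 a7 a8 where x: "x = (a1, a2, a3, a4, a5, a6, a7, a8)"
    by (metis prod.exhaust)
  have pos: "0 < a1" "0 < a2" "0 < a3" "0 < a4" "0 < a5" "0 < a6" "0 < a7" "0 < a8"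
    and d0: "det (Pmat a1 a2 a3 a4 a5 a6 a7 a8) = 1" using assms unfolding x SS_def by auto
  have d: "det (Pmat a1 a2 a3 a4 a5 a6 a7 a8 ** Qu) = 1" by (simp add: det_mul det_Qu d0)
  note d' = d[unfolded Pmat_Qu]
  show ?thesis using pos d' unfolding x SS_def stp_def by simp
qed

primrec seqx :: "nat \<Rightarrow> int\<times>int\<times>int\<times>int\<times>int\<times>int\<times>int\<times>int" where
  "seqx 0 = (2, 6, 1, 3, 7, 21, 4, 12)"
| "seqx (Suc n) = stp (seqx n)"

lemma seqx_SS: "seqx n \<in> SS"
proof (induction n)
  case 0 then show ?case by (simp add: SS_def det_Pu)
next
  case (Suc n) then show ?case using stp_SS by simp
qed

theorem mainTheorem15:
  shows "infinite {(x1::int, x2::int, x3::int, x4::int, x5::int, x6::int, x7::int, x8::int).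
            0 < x1 \<and> 0 < x2 \<and> 0 < x3 \<and> 0 < x4 \<and> 0 < x5 \<and> 0 < x6 \<and> 0 < x7 \<and> 0 < x8 \<and>
            det (Pmat x1 x2 x3 x4 x5 x6 x7 x8) = 1}"
proof -
  have sm: "strict_mono (\<lambda>n. fst (seqx n))"
    by (rule strict_monoI_Suc) (use stp_SS seqx_SS in auto)
  have "inj seqx"
  proof (rule injI)
    fix m n assume "seqx m = seqx n"
    then have "fst (seqx m) = fst (seqx n)" by simp
    then show "m = n" using strict_mono_eq[OF sm] by blast
  qed
  then have "infinite (range seqx)" by (rule range_inj_infinite)
  moreover have "range seqx \<subseteq> SS" using seqx_SS by auto
  ultimately have "infinite SS" using infinite_super by blast
  then show ?thesis unfolding SS_def .
qed

end
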